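(* Let $\mathcal{G}=(V,L)$ be a finite connected undirected graph with monitor set $M$ and non-monitor set $N=V\setminus M$, $\sigma=|N|$, with measurement paths given by Controllable Simple-path Probing (CSP). For $v\in N$ let $\pi_v:=\min\big(\min_{m\in M}|C_{\mathcal{G}_m}(v,m')|,\ |C_{\mathcal{G}^*}(v,m')|-1\big)$. For $1\le k\le\sigma-1$ let $S^{\mathrm{outer}}(k):=\{v\in N:\pi_v\ge k\}$ and $S^{\mathrm{inner}}(k):=\{v\in N:\pi_v\ge k+1\}$, and let $S^*_{\mathrm{CSP}}(k)$ be the maximum-cardinality $k$-identifiable subset of $N$. Then $S^{\mathrm{inner}}(k)\subseteq S^*_{\mathrm{CSP}}(k)\subseteq S^{\mathrm{outer}}(k)$.
   Context: Under CSP, the measurement paths $P$ are all simple paths (no repeated nodes) in $\mathcal{G}$ between two distinct monitors. A failure set is any $F\subseteq N$; a path fails iff it traverses a node of $F$. $P_F$ is the set of paths in $P$ traversing a node of $F$; $F_1,F_2$ distinguishable iff $P_{F_1}\ne P_{F_2}$. $S\subseteq N$ is $k$-identifiable if any two failure sets $F_1,F_2$ with $|F_1|,|F_2|\le k$ and $F_1\cap S\ne F_2\cap S$ are distinguishable; the maximum-cardinality $k$-identifiable subset of $N$ is unique. For $M'\subseteq M$, $\mathcal{N}(M')$ is the set of non-monitors adjacent to a monitor in $M'$. $\mathcal{G}^*$: delete all monitors from $\mathcal{G}$, add a virtual node $m'$, link $m'$ to every node of $\mathcal{N}(M)$. For $m\in M$, $\mathcal{G}_m$: delete all monitors, add a virtual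 node $m'$, link $m'$ to every node of $\mathcal{N}(M\setminus\{m\})$. For nodes $s,t$ of a graph $\mathcal{H}$, $C_{\mathcal{H}}(s,t)$ is a minimum-cardinality set of nodes (other than $s,t$) whose deletion destroys all $s$–$t$ paths; if $s,t$ are adjacent, $C_{\mathcal{H}}(s,t):=V(\mathcal{H})\setminus\{t\}$. *)

theory Defs
  imports Main
begin

definition simple_graph :: "'a set \<Rightarrow> ('a \<times> 'a) set \<Rightarrow> bool" where
  "simple_graph V E \<longleftrightarrow> finite V \<and> E \<subseteq> V \<times> V \<and> sym E \<and> (\<forall>x. (x, x) \<notin> E)"

definition connected_graph :: "'a set \<Rightarrow> ('a \<times> 'a) set \<Rightarrow> bool" where
  "connected_graph V E \<longleftrightarrow> (\<forall>u\<in>V. \<forall>v\<in>V. (u, v) \<in> E\<^sup>*)"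

definition simple_path :: "('a \<times> 'a) set \<Rightarrow> 'a list \<Rightarrow> bool" where
  "simple_path E p \<longleftrightarrow> p \<noteq> [] \<and> distinct p \<and> (\<forall>i. Suc i < length p \<longrightarrow> (p ! i, p ! Suc i) \<in> E)"

definition csp_paths :: "('a \<times> 'a) set \<Rightarrow> 'a set \<Rightarrow> 'a list set" where
  "csp_paths E M = {p. simple_path E p \<and> hd p \<in> M \<and> last p \<in> M \<and> hd p \<noteq> last p}"

definition failed_paths :: "'a list set \<Rightarrow> 'a set \<Rightarrow> 'a list set" where
  "failed_paths P F = {p \<in> P. set p \<inter> F \<noteq> {}}"

definition k_identifiable :: "('a \<times> 'a) set \<Rightarrow> 'a set \<Rightarrow> 'a set \<Rightarrow> nat \<Rightarrow> 'a set \<Rightarrow> bool" where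
  "k_identifiable E M N k S \<longleftrightarrow>
     (\<forall>F1 F2. F1 \<subseteq> N \<longrightarrow> F2 \<subseteq> N \<longrightarrow> card F1 \<le> k \<longrightarrow> card F2 \<le> k \<longrightarrow>
        F1 \<inter> S \<noteq> F2 \<inter> S \<longrightarrow> failed_paths (csp_paths E M) F1 \<noteq> failed_paths (csp_paths E M) F2)"

definition mon_nbrs :: "'a set \<Rightarrow> ('a \<times> 'a) set \<Rightarrow> 'a set \<Rightarrow> 'a set \<Rightarrow> 'a set" where
  "mon_nbrs V E M M' = {v \<in> V - M. \<exists>m\<in>M'. (m, v) \<in> E}"

text \<open>Auxiliary graph: delete monitors, add virtual node None (= m') linked to
  every node of A. Original nodes v are represented as Some v.\<close>
definition aux_vertices :: "'a set \<Rightarrow> 'a set \<Rightarrow> 'a option set" where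
  "aux_vertices V M = Some ` (V - M) \<union> {None}"

definition aux_edges :: "'a set \<Rightarrow> ('a \<times> 'a) set \<Rightarrow> 'a set \<Rightarrow> 'a set \<Rightarrow> ('a option \<times> 'a option) set" where
  "aux_edges V E M A =
     {(Some a, Some b) | a b. (a, b) \<in> E \<and> a \<in> V - M \<and> b \<in> V - M}
     \<union> {(None, Some v) | v. v \<in> A} \<union> {(Some v, None) | v. v \<in> A}"

definition separates :: "'b set \<Rightarrow> ('b \<times> 'b) set \<Rightarrow> 'b \<Rightarrow> 'b \<Rightarrow> 'b set \<Rightarrow> bool" where
  "separates VH EH s t C \<longleftrightarrow> C \<subseteq> VH - {s, t} \<and>
     (s, t) \<notin> (EH \<inter> ((VH - C) \<times> (VH - C)))\<^sup>*"

definition cut_size :: "'b set \<Rightarrow> ('b \<times> 'b) set \<Rightarrow> 'b \<Rightarrow> 'b \<Rightarrow> nat" where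
  "cut_size VH EH s t =
     (if (s, t) \<in> EH then card (VH - {t}) else Min {card C | C. separates VH EH s t C})"

definition pi_val :: "'a set \<Rightarrow> ('a \<times> 'a) set \<Rightarrow> 'a set \<Rightarrow> 'a \<Rightarrow> int" where
  "pi_val V E M v = Min
     ({int (cut_size (aux_vertices V M) (aux_edges V E M (mon_nbrs V E M (M - {m}))) (Some v) None) | m. m \<in> M}
      \<union> {int (cut_size (aux_vertices V M) (aux_edges V E M (mon_nbrs V E M M)) (Some v) None) - 1})"

definition S_outer :: "'a set \<Rightarrow> ('a \<times> 'a) set \<Rightarrow> 'a set \<Rightarrow> nat \<Rightarrow> 'a set" where
  "S_outer V E M k = {v \<in> V - M. pi_val V E M v \<ge> int k}"

definition S_inner :: "'a set \<Rightarrow> ('a \<times> 'a) set \<Rightarrow> 'a set \<Rightarrow> nat \<Rightarrow> 'a set" where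
  "S_inner V E M k = {v \<in> V - M. pi_val V E M v \<ge> int k + 1}"

end

theory Submission
  imports Defs "HOL-Library.Transitive_Closure_Table"
begin


definition pth :: "('b \<times> 'b) set \<Rightarrow> 'b list \<Rightarrow> 'b \<Rightarrow> 'b \<Rightarrow> bool" where
  "pth R p a b \<longleftrightarrow> p \<noteq> [] \<and> hd p = a \<and> last p = b \<and> distinct p \<and> successively (\<lambda>x y. (x,y) \<in> R) p"

lemma rtrancl_path_succ:
  "rtrancl_path r x xs y \<Longrightarrow> successively r (x # xs) \<and> last (x # xs) = y"
  by (induction rule: rtrancl_path.induct) auto

lemma rt_pth:
  assumes "(a,b) \<in> R\<^sup>*" shows "\<exists>p. pth R p a b"
proof -
  have "(\<lambda>x y. (x,y) \<in> R)\<^sup>*\<^sup>* a b" using assms by (simp add: rtranclp_rtrancl_eq)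
  then obtain xs where "rtrancl_path (\<lambda>x y. (x,y) \<in> R) a xs b"
    using rtranclp_eq_rtrancl_path by metis
  then obtain xs' where "rtrancl_path (\<lambda>x y. (x,y) \<in> R) a xs' b" "distinct (a # xs')"
    using rtrancl_path_distinct by metis
  then show ?thesis using rtrancl_path_succ[of _ a xs' b] unfolding pth_def
    by (intro exI[of _ "a # xs'"]) auto
qed

lemma succ_rt: "successively (\<lambda>x y. (x,y) \<in> R) p \<Longrightarrow> p \<noteq> [] \<Longrightarrow> (hd p, last p) \<in> R\<^sup>*"
proof (induction p)
  case Nil then show ?case by simp
next
  case (Cons a p)
  show ?case
  proof (cases p)
    case Nil then show ?thesis by simp
  next
    case (Cons b q)
    then have "(a, b) \<in> R" "successively (\<lambda>x y. (x,y) \<in> R) p" using Cons.prems by auto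
    then have "(b, last p) \<in> R\<^sup>*" using Cons.IH Cons by auto
    then show ?thesis using \<open>(a,b) \<in> R\<close> Cons by (auto intro: converse_rtrancl_into_rtrancl)
  qed
qed

lemma succ_restrict:
  "successively (\<lambda>x y. (x,y) \<in> R) p \<Longrightarrow> set p \<subseteq> A \<Longrightarrow> successively (\<lambda>x y. (x,y) \<in> R \<inter> A \<times> A) p"
  by (induction p) (auto simp: successively_Cons)

lemma succ_mono:
  "successively (\<lambda>x y. (x,y) \<in> R) p \<Longrightarrow> R \<subseteq> R' \<Longrightarrow> successively (\<lambda>x y. (x,y) \<in> R') p"
  by (induction p) (auto simp: successively_Cons)

lemma succ_set_restrict:
  "successively (\<lambda>x y. (x,y) \<in> R \<inter> A \<times> A) p \<Longrightarrow> p \<noteq> [] \<Longrightarrow> hd p \<in> A \<Longrightarrow> set p \<subseteq> A"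
  by (induction p) (fastforce simp: successively_Cons)+

lemma succ_sym: "sym R \<Longrightarrow> successively (\<lambda>x y. (x,y) \<in> R) p \<Longrightarrow> successively (\<lambda>x y. (x,y) \<in> R) (rev p)"
  by (simp, erule successively_mono) (auto dest: symD)

lemma succ_nth: "successively P xs \<longleftrightarrow> (\<forall>i. Suc i < length xs \<longrightarrow> P (xs ! i) (xs ! Suc i))"
proof (induction xs)
  case Nil then show ?case by simp
next
  case (Cons x xs)
  show ?case
  proof (cases xs)
    case Nil then show ?thesis by simp
  next
    case (Cons y ys)
    have "successively P (x # xs) \<longleftrightarrow> P x y \<and> successively P xs" using Cons by simp
    also have "\<dots> \<longleftrightarrow> P x y \<and> (\<forall>i. Suc i < length xs \<longrightarrow> P (xs ! i) (xs ! Suc i))"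
      using Cons.IH by simp
    also have "\<dots> \<longleftrightarrow> (\<forall>i. Suc i < length (x # xs) \<longrightarrow> P ((x # xs) ! i) ((x # xs) ! Suc i))"
    proof
      assume "P x y \<and> (\<forall>i. Suc i < length xs \<longrightarrow> P (xs ! i) (xs ! Suc i))"
      then show "\<forall>i. Suc i < length (x # xs) \<longrightarrow> P ((x # xs) ! i) ((x # xs) ! Suc i)"
        using Cons by (auto simp: nth_Cons split: nat.splits)
    next
      assume H: "\<forall>i. Suc i < length (x # xs) \<longrightarrow> P ((x # xs) ! i) ((x # xs) ! Suc i)"
      have "P x y" using H[rule_format, of 0] Cons by simp
      moreover have "\<forall>i. Suc i < length xs \<longrightarrow> P (xs ! i) (xs ! Suc i)"
        using H[rule_format, of "Suc _"] by auto
      ultimately show "P x y \<and> (\<forall>i. Suc i < length xs \<longrightarrow> P (xs ! i) (xs ! Suc i))" by simp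
    qed
    finally show ?thesis .
  qed
qed

definition NS :: "('b \<times> 'b) set \<Rightarrow> 'b \<Rightarrow> 'b \<Rightarrow> bool" where
  "NS R s x \<longleftrightarrow> (\<forall>z. z \<noteq> s \<longrightarrow> z \<noteq> x \<longrightarrow> (s, x) \<in> (R \<inter> (-{z}) \<times> (-{z}))\<^sup>*)"

definition Two :: "('b \<times> 'b) set \<Rightarrow> 'b \<Rightarrow> 'b \<Rightarrow> bool" where
  "Two R s x \<longleftrightarrow> (\<exists>P1 P2. pth R P1 s x \<and> pth R P2 s x \<and> set P1 \<inter> set P2 \<subseteq> {s, x})"

lemma step_out:
  assumes "pth R P1 s w" "pth R P2 s w" "set P1 \<inter> set P2 \<subseteq> {s,w}"
    "x \<notin> set P1 \<union> set P2" "(w,x) \<in> R" "z \<in> set P1" "z \<noteq> w"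
    "successively (\<lambda>a b. (a,b) \<in> R) (z # zs)" "last (z # zs) = x" "distinct (z # zs)"
    "set zs \<inter> (set P1 \<union> set P2) = {}"
  shows "Two R s x"
proof -
  obtain a b where P1: "P1 = a @ z # b" using assms(6) split_list by metis
  have dP1: "distinct P1" and sP1: "successively (\<lambda>a b. (a,b) \<in> R) P1"
    and hP1: "hd P1 = s" and lP1: "last P1 = w"
    using assms(1) unfolding pth_def by auto
  have "b \<noteq> []" using lP1 P1 assms(7) by auto
  then have wb: "w \<in> set b" using lP1 P1 by auto
  then have wa: "w \<notin> set a" "w \<noteq> z" using dP1 P1 by auto
  have N1: "pth R (a @ z # zs) s x"
  proof -
    have "hd (a @ z # zs) = s" using hP1 P1 by (cases a) auto
    moreover have "distinct (a @ z # zs)"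
      using dP1 P1 assms(10,11) by auto
    moreover have "successively (\<lambda>a b. (a,b) \<in> R) (a @ z # zs)"
      using sP1 P1 assms(8) by (auto simp: successively_append_iff)
    ultimately show ?thesis using assms(9) unfolding pth_def by auto
  qed
  have N2: "pth R (P2 @ [x]) s x"
    using assms(2,4,5) unfolding pth_def by (auto simp: successively_append_iff)
  have "set (a @ z # zs) \<inter> set (P2 @ [x]) \<subseteq> {s, x}"
  proof
    fix y assume y: "y \<in> set (a @ z # zs) \<inter> set (P2 @ [x])"
    show "y \<in> {s, x}"
    proof (cases "y = x")
      case False
      then have "y \<in> set P2" using y by auto
      moreover have "y \<notin> set zs" using assms(11) \<open>y \<in> set P2\<close> by auto
      ultimately have "y \<in> set P1 \<inter> set P2" "y \<noteq> w" using y P1 wa by auto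
      then show ?thesis using assms(3) by auto
    qed simp
  qed
  then show ?thesis unfolding Two_def using N1 N2 by blast
qed

lemma step_in:
  assumes "sym R" "pth R P1 s w" "pth R P2 s w" "set P1 \<inter> set P2 \<subseteq> {s,w}"
    "x \<in> set P1" "x \<noteq> s" "x \<noteq> w"
  shows "Two R s x"
proof -
  obtain a b where P1: "P1 = a @ x # b" using assms(5) split_list by metis
  have dP1: "distinct P1" and sP1: "successively (\<lambda>a b. (a,b) \<in> R) P1"
    and hP1: "hd P1 = s" and lP1: "last P1 = w"
    using assms(2) unfolding pth_def by auto
  have dP2: "distinct P2" and sP2: "successively (\<lambda>a b. (a,b) \<in> R) P2"
    and hP2: "hd P2 = s" and lP2: "last P2 = w" and nP2: "P2 \<noteq> []"
    using assms(3) unfolding pth_def by auto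
  have "b \<noteq> []" using lP1 P1 assms(7) by auto
  have "a \<noteq> []" using hP1 P1 assms(6) by auto
  have sa: "s \<in> set a" using \<open>a \<noteq> []\<close> hP1 P1 by (cases a) auto
  obtain c where rb: "rev b = w # c" using \<open>b \<noteq> []\<close> lP1 P1
    by (cases "rev b") (auto simp: last_rev[symmetric] simp del: last_rev)
  have "set (w # c) = set b" using rb by (metis set_rev)
  moreover have "distinct (w # c)" using rb dP1 P1 by (metis distinct_rev distinct_append distinct.simps(2))
  ultimately have cb: "set c \<subseteq> set b" "w \<notin> set c" by auto
  have N1: "pth R (a @ [x]) s x"
  proof -
    have "hd (a @ [x]) = s" using hP1 P1 \<open>a \<noteq> []\<close> by auto
    moreover have "distinct (a @ [x])" using dP1 P1 by auto
    moreover have "successively (\<lambda>a b. (a,b) \<in> R) (a @ [x])"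
      using sP1 P1 by (auto simp: successively_append_iff)
    ultimately show ?thesis unfolding pth_def by auto
  qed
  have xP2: "x \<notin> set P2" using assms(4,5,6,7) by auto
  have bP2: "set b \<inter> set P2 \<subseteq> {w}"
  proof -
    have "s \<notin> set b" using sa dP1 P1 by auto
    then show ?thesis using assms(4) P1 by auto
  qed
  have N2: "pth R (P2 @ c @ [x]) s x"
  proof -
    have sxb: "successively (\<lambda>a b. (a,b) \<in> R) (x # b)"
      using sP1 P1 by (auto simp: successively_append_iff)
    have "successively (\<lambda>a b. (a,b) \<in> R) (rev (x # b))" using succ_sym[OF assms(1) sxb] .
    then have sc: "successively (\<lambda>a b. (a,b) \<in> R) (w # c @ [x])" using rb by simp
    have "successively (\<lambda>a b. (a,b) \<in> R) (P2 @ (c @ [x]))"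
    proof (cases "P2 = [w]")
      case True then show ?thesis using sc by simp
    next
      case False
      have "P2 = butlast P2 @ [w]" using nP2 lP2 append_butlast_last_id by metis
      have "successively (\<lambda>a b. (a,b) \<in> R) (butlast P2 @ [w])"
        using sP2 \<open>P2 = butlast P2 @ [w]\<close> by simp
      then have "successively (\<lambda>a b. (a,b) \<in> R) ((butlast P2 @ [w]) @ (c @ [x]))"
        using sc by (subst successively_append_iff) (simp add: successively_Cons)
      then show ?thesis using \<open>P2 = butlast P2 @ [w]\<close> by simp
    qed
    moreover have "distinct (P2 @ c @ [x])"
    proof -
      have "distinct (rev b)" using dP1 P1 by auto
      then have "distinct c" using rb by simp
      moreover have "x \<notin> set c" using cb dP1 P1 by auto
      moreover have "set c \<inter> set P2 = {}" using cb bP2 by auto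
      ultimately show ?thesis using dP2 xP2 by auto
    qed
    ultimately show ?thesis using hP2 nP2 unfolding pth_def by auto
  qed
  have "set (a @ [x]) \<inter> set (P2 @ c @ [x]) \<subseteq> {s, x}"
  proof
    fix y assume y: "y \<in> set (a @ [x]) \<inter> set (P2 @ c @ [x])"
    show "y \<in> {s, x}"
    proof (cases "y = x")
      case False
      then have ya: "y \<in> set a" using y by auto
      then have "y \<notin> set b" using dP1 P1 by auto
      then have "y \<notin> set c" using cb by auto
      then have "y \<in> set P2" using y False by auto
      moreover have "y \<noteq> w" using ya \<open>y \<notin> set b\<close> lP1 P1 \<open>b \<noteq> []\<close> by auto
      ultimately show ?thesis using assms(4) ya P1 by auto
    qed simp
  qed
  then show ?thesis unfolding Two_def using N1 N2 by blast
qed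

lemma Two_swap: "Two R s x \<Longrightarrow> Two R s x" by simp

lemma menger2:
  assumes "sym R" "NS R s x" "s \<noteq> x" "pth R p s x"
  shows "Two R s x"
  using assms(2-4)
proof (induction "length p" arbitrary: p x rule: less_induct)
  case less
  show ?case
  proof (cases "(s,x) \<in> R")
    case True
    then have "pth R [s,x] s x" using less.prems unfolding pth_def by auto
    then show ?thesis unfolding Two_def by (intro exI[of _ "[s,x]"]) auto
  next
    case False
    have pne: "p \<noteq> []" and hp: "hd p = s" and lp: "last p = x" and dp: "distinct p"
      and sp: "successively (\<lambda>a b. (a,b) \<in> R) p" using less.prems(3) unfolding pth_def by auto
    define p' where "p' = butlast p"
    have pp: "p = p' @ [x]" using pne lp p'_def append_butlast_last_id by metis
    have p'ne: "p' \<noteq> []" using pp hp less.prems(2) by auto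
    define w where "w = last p'"
    have hp': "hd p' = s" using hp pp p'ne by simp
    have "successively (\<lambda>a b. (a,b) \<in> R) (p' @ [x])" using sp pp by simp
    then have sp': "successively (\<lambda>a b. (a,b) \<in> R) p'" and wx: "(w,x) \<in> R"
      using p'ne unfolding w_def by (auto simp: successively_append_iff)
    have dp': "distinct p'" and xp': "x \<notin> set p'" using dp pp by auto
    have wxne: "w \<noteq> x" using xp' p'ne w_def by auto
    have wsne: "w \<noteq> s" using wx False by auto
    have pth': "pth R p' s w" using p'ne hp' dp' sp' w_def unfolding pth_def by auto
    have len: "length p' < length p" using pp by simp
    have NSw: "NS R s w" unfolding NS_def
    proof (intro allI impI)
      fix z assume zs: "z \<noteq> s" and zw: "z \<noteq> w"
      show "(s, w) \<in> (R \<inter> (-{z}) \<times> (-{z}))\<^sup>*"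
      proof (cases "z = x")
        case True
        have "successively (\<lambda>a b. (a,b) \<in> R \<inter> (-{z}) \<times> (-{z})) p'"
          using succ_restrict[OF sp', of "-{z}"] xp' True by auto
        from succ_rt[OF this p'ne] show ?thesis using hp' w_def by simp
      next
        case False
        have "(s, x) \<in> (R \<inter> (-{z}) \<times> (-{z}))\<^sup>*" using less.prems(1) zs False unfolding NS_def by auto
        moreover have "(x, w) \<in> R \<inter> (-{z}) \<times> (-{z})" using wx assms(1) False zw by (auto dest: symD)
        ultimately show ?thesis by (rule rtrancl_into_rtrancl)
      qed
    qed
    obtain P1 P2 where P: "pth R P1 s w" "pth R P2 s w" "set P1 \<inter> set P2 \<subseteq> {s, w}"
      using less.hyps[OF len NSw wsne[symmetric] pth'] unfolding Two_def by blast
    have "(s, x) \<in> (R \<inter> (-{w}) \<times> (-{w}))\<^sup>*" using less.prems(1) wxne wsne unfolding NS_def by auto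
    then obtain Q where Q: "pth (R \<inter> (-{w}) \<times> (-{w})) Q s x" using rt_pth by metis
    have Qne: "Q \<noteq> []" and hQ: "hd Q = s" and lQ: "last Q = x" and dQ: "distinct Q"
      and sQr: "successively (\<lambda>a b. (a,b) \<in> R \<inter> (-{w}) \<times> (-{w})) Q" using Q unfolding pth_def by auto
    have wQ: "w \<notin> set Q" using succ_set_restrict[OF sQr Qne] hQ wsne by auto
    have sQ: "successively (\<lambda>a b. (a,b) \<in> R) Q" using succ_mono[OF sQr] by blast
    show ?thesis
    proof (cases "x \<in> set P1 \<or> x \<in> set P2")
      case True
      then show ?thesis
      proof
        assume "x \<in> set P1" then show ?thesis
          by (intro step_in[OF assms(1) P(1,2,3)]) (use wxne less.prems(2) in auto)
      next
        assume "x \<in> set P2" then show ?thesis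
          by (intro step_in[OF assms(1) P(2,1)]) (use P(3) wxne less.prems(2) in auto)
      qed
    next
      case False
      let ?C = "set P1 \<union> set P2"
      have "s \<in> ?C" using P(1) unfolding pth_def by (cases P1) auto
      moreover have "s \<in> set Q" using Qne hQ by (cases Q) auto
      ultimately have ex: "\<exists>y\<in>set Q. y \<in> ?C" by blast
      obtain ys z zs where Qs: "Q = ys @ z # zs" "z \<in> ?C" "\<forall>y\<in>set zs. y \<notin> ?C"
        using split_list_last_prop[OF ex] by blast
      have zw: "z \<noteq> w" using wQ Qs by auto
      have lz: "last (z # zs) = x" using lQ Qs by simp
      have dz: "distinct (z # zs)" using dQ Qs by simp
      have sz: "successively (\<lambda>a b. (a,b) \<in> R) (z # zs)" using sQ Qs
        by (simp add: successively_append_iff)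
      have ze: "set zs \<inter> ?C = {}" using Qs by auto
      from Qs(2) show ?thesis
      proof
        assume "z \<in> set P1" then show ?thesis
          by (intro step_out[OF P(1,2,3) _ wx _ zw sz lz dz]) (use False ze in auto)
      next
        assume "z \<in> set P2" then show ?thesis
          by (intro step_out[OF P(2,1) _ _ wx _ zw sz lz dz]) (use False ze P(3) in auto)
      qed
    qed
  qed
qed




lemma succ_join: "successively P (xs @ [v]) \<Longrightarrow> successively P (v # ys) \<Longrightarrow> successively P (xs @ v # ys)"
  by (auto simp: successively_append_iff)

lemma set_bl: "xs \<noteq> [] \<Longrightarrow> set xs = insert (last xs) (set (butlast xs))"
  by (induction xs) auto

lemma simple_path_iff: "simple_path E p \<longleftrightarrow> p \<noteq> [] \<and> distinct p \<and> successively (\<lambda>a b. (a,b) \<in> E) p"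
  unfolding simple_path_def succ_nth by auto

definition seg :: "('a \<times> 'a) set \<Rightarrow> 'a set \<Rightarrow> 'a list \<Rightarrow> bool" where
  "seg E M q \<longleftrightarrow> q \<noteq> [] \<and> last q \<in> M \<and> set (butlast q) \<inter> M = {} \<and> successively (\<lambda>a b. (a,b) \<in> E) q"

lemma first_mon:
  assumes "successively (\<lambda>a b. (a,b) \<in> E) xs" "xs \<noteq> []" "last xs \<in> M"
  shows "\<exists>q r. xs = q @ r \<and> seg E M q"
proof -
  have ex: "\<exists>x\<in>set xs. x \<in> M" using assms(2,3) last_in_set by blast
  obtain ys x zs where xs: "xs = ys @ x # zs" "x \<in> M" "\<forall>y\<in>set ys. y \<notin> M"
    using split_list_first_prop[OF ex] by blast
  have "successively (\<lambda>a b. (a,b) \<in> E) ((ys @ [x]) @ zs)" using assms(1) xs(1) by simp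
  then have "successively (\<lambda>a b. (a,b) \<in> E) (ys @ [x])"
    using successively_append_iff by blast
  then have "seg E M (ys @ [x])" using xs unfolding seg_def by auto
  then show ?thesis using xs(1) by (intro exI[of _ "ys @ [x]"] exI[of _ zs]) simp
qed

context
  fixes V :: "'a set" and E :: "('a \<times> 'a) set" and M :: "'a set"
  assumes sg: "simple_graph V E" and MV: "M \<subseteq> V"
begin

lemma symE: "sym E" using sg unfolding simple_graph_def by auto
lemma EV: "E \<subseteq> V \<times> V" using sg unfolding simple_graph_def by auto
lemma finV: "finite V" using sg unfolding simple_graph_def by auto
lemma irrE: "(x, x) \<notin> E" using sg unfolding simple_graph_def by auto

lemma csp_segs:
  assumes p: "p \<in> csp_paths E M" and v: "v \<in> set p" "v \<notin> M"
  shows "\<exists>q1 q2. seg E M q1 \<and> seg E M q2 \<and> hd q1 = v \<and> hd q2 = v \<and> set q1 \<inter> set q2 = {v}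
     \<and> last q1 \<noteq> last q2 \<and> set q1 \<subseteq> set p \<and> set q2 \<subseteq> set p"
proof -
  have sp: "simple_path E p" and hp: "hd p \<in> M" and lp: "last p \<in> M" using p unfolding csp_paths_def by auto
  then have pne: "p \<noteq> []" and dp: "distinct p" and ssp: "successively (\<lambda>a b. (a,b) \<in> E) p"
    using simple_path_iff by auto
  obtain a b where pab: "p = a @ v # b" using v(1) split_list by metis
  have s2: "successively (\<lambda>a b. (a,b) \<in> E) (v # b)" using ssp pab
    by (auto simp: successively_append_iff)
  have l2: "last (v # b) \<in> M" using lp pab by simp
  obtain q2 r2 where q2: "v # b = q2 @ r2" "seg E M q2" using first_mon[OF s2 _ l2] by blast
  have s1: "successively (\<lambda>a b. (a,b) \<in> E) (rev (a @ [v]))"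
  proof -
    have "successively (\<lambda>a b. (a,b) \<in> E) (a @ [v])" using ssp pab
      by (auto simp: successively_append_iff)
    then show ?thesis using succ_sym[OF symE] by blast
  qed
  have l1: "last (rev (a @ [v])) \<in> M" using hp pab by (cases a) auto
  obtain q1 r1 where q1: "rev (a @ [v]) = q1 @ r1" "seg E M q1" using first_mon[OF s1 _ l1] by blast
  have q1ne: "q1 \<noteq> []" and q2ne: "q2 \<noteq> []" using q1 q2 unfolding seg_def by auto
  have hq1: "hd q1 = v" using q1(1) q1ne by (cases q1) auto
  have hq2: "hd q2 = v" using q2(1) q2ne by (cases q2) auto
  have sq1: "set q1 \<subseteq> insert v (set a)"
  proof -
    have "set q1 \<subseteq> set (rev (a @ [v]))" using q1(1) by (metis set_append Un_upper1)
    then show ?thesis by auto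
  qed
  have sq2: "set q2 \<subseteq> insert v (set b)"
  proof -
    have "set q2 \<subseteq> set (v # b)" using q2(1) by (metis set_append Un_upper1)
    then show ?thesis by auto
  qed
  have dab: "set a \<inter> set b = {}" "v \<notin> set a" "v \<notin> set b" using dp pab by auto
  have "v \<in> set q1" "v \<in> set q2" using hq1 hq2 q1ne q2ne hd_in_set by metis+
  then have inter: "set q1 \<inter> set q2 = {v}" using sq1 sq2 dab by blast
  have "last q1 \<in> M" "last q2 \<in> M" using q1 q2 unfolding seg_def by auto
  moreover have "last q1 \<in> set q1" "last q2 \<in> set q2" using q1ne q2ne by auto
  ultimately have "last q1 \<noteq> last q2" using inter v(2) by auto
  moreover have "set q1 \<subseteq> set p" "set q2 \<subseteq> set p" using sq1 sq2 pab by auto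
  ultimately show ?thesis using q1 q2 hq1 hq2 inter by blast
qed

abbreviation "VH \<equiv> aux_vertices V M"
abbreviation "EH A \<equiv> aux_edges V E M A"

lemma mon_nbrs_sub: "mon_nbrs V E M M' \<subseteq> V - M" unfolding mon_nbrs_def by auto

lemma seg_blocked:
  assumes q: "seg E M q" "hd q = v" "v \<notin> M" "last q \<in> M'" "M' \<subseteq> M" "set q \<subseteq> V"
    and sep: "separates VH (EH (mon_nbrs V E M M')) (Some v) None C"
  shows "Some ` set (butlast q) \<inter> C \<noteq> {}"
proof
  assume dis: "Some ` set (butlast q) \<inter> C = {}"
  have qne: "q \<noteq> []" and lq: "last q \<in> M" and bM: "set (butlast q) \<inter> M = {}"
    and sq: "successively (\<lambda>a b. (a,b) \<in> E) q" using q(1) unfolding seg_def by auto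
  define b where "b = butlast q"
  have qb: "q = b @ [last q]" using qne b_def by simp
  have bne: "b \<noteq> []" using qb q(2,3) lq by (metis append_Nil last_snoc list.sel(1))
  have hb: "hd b = v" using qb bne q(2) by (metis hd_append2)
  have "set b \<subseteq> set q" using qb by (metis set_append Un_upper1)
  then have bV: "set b \<subseteq> V - M" using bM q(6) b_def by blast
  have sb: "successively (\<lambda>a b. (a,b) \<in> E) (b @ [last q])" using sq qb by simp
  then have sb1: "successively (\<lambda>a b. (a,b) \<in> E) b" and lastE: "(last b, last q) \<in> E"
    using bne by (auto simp: successively_append_iff)
  have "(last q, last b) \<in> E" using lastE symE by (auto dest: symD)
  moreover have "last b \<in> V - M" using bV bne last_in_set by blast
  ultimately have lbA: "last b \<in> mon_nbrs V E M M'" using q(4) unfolding mon_nbrs_def by auto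
  have CV: "C \<subseteq> VH - {Some v, None}" using sep unfolding separates_def by auto
  let ?R = "EH (mon_nbrs V E M M') \<inter> (VH - C) \<times> (VH - C)"
  have "successively (\<lambda>x y. (x,y) \<in> ?R) (map Some b)"
    unfolding successively_map
  proof (rule successively_mono[OF sb1])
    fix x y assume "(x, y) \<in> E" "x \<in> set b" "y \<in> set b"
    then show "(Some x, Some y) \<in> ?R" using bV dis b_def unfolding aux_edges_def aux_vertices_def by auto
  qed
  from succ_rt[OF this] bne have "(Some v, Some (last b)) \<in> ?R\<^sup>*" using hb
    by (simp add: hd_map last_map)
  moreover have "last b \<in> set b" using bne by simp
  then have "Some (last b) \<notin> C" "last b \<in> V - M" using dis bV b_def by auto
  then have "(Some (last b), None) \<in> ?R" using lbA CV
    unfolding aux_edges_def aux_vertices_def by auto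
  ultimately have "(Some v, None) \<in> ?R\<^sup>*" by (rule rtrancl_into_rtrancl)
  then show False using sep unfolding separates_def by blast
qed

lemma finVH: "finite VH" using finV unfolding aux_vertices_def by auto

lemma adj_iff: "v \<in> V - M \<Longrightarrow> (Some v, None) \<in> EH A \<longleftrightarrow> v \<in> A"
  unfolding aux_edges_def by auto

lemma card_VH: "card (VH - {None}) = card (V - M)"
proof -
  have "VH - {None} = Some ` (V - M)" unfolding aux_vertices_def by auto
  then show ?thesis by (simp add: card_image)
qed

lemma sep_finite: "finite {card C | C. separates VH EH' s t C}"
proof -
  have "{card C | C. separates VH EH' s t C} \<subseteq> card ` Pow VH" unfolding separates_def by auto
  then show ?thesis using finVH finite_subset by blast
qed

lemma cut_le:
  assumes "(Some v, None) \<notin> EH A" "separates VH (EH A) (Some v) None C"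
  shows "cut_size VH (EH A) (Some v) None \<le> card C"
  using assms sep_finite unfolding cut_size_def by (auto intro: Min_le)

lemma not_sep_trivial:
  assumes v: "v \<in> V - M" and na: "(Some v, None) \<notin> EH A"
  shows "separates VH (EH A) (Some v) None (VH - {Some v, None})"
proof -
  let ?R = "EH A \<inter> (VH - (VH - {Some v, None})) \<times> (VH - (VH - {Some v, None}))"
  have "(Some v, y) \<in> ?R\<^sup>* \<Longrightarrow> y = Some v" for y
  proof (induction rule: rtrancl_induct)
    case (step y z)
    then have "(Some v, z) \<in> EH A" "z \<in> {Some v, None}" by auto
    then show ?case using na irrE unfolding aux_edges_def by auto
  qed simp
  then show ?thesis unfolding separates_def by auto
qed

lemma cut_attained:
  assumes v: "v \<in> V - M" and na: "(Some v, None) \<notin> EH A"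
  shows "\<exists>C. separates VH (EH A) (Some v) None C \<and> card C = cut_size VH (EH A) (Some v) None"
proof -
  have "{card C | C. separates VH (EH A) (Some v) None C} \<noteq> {}"
    using not_sep_trivial[OF v na] by blast
  from Min_in[OF sep_finite this] show ?thesis using na unfolding cut_size_def by auto
qed

lemma csp_set: "p \<in> csp_paths E M \<Longrightarrow> set p \<subseteq> V"
proof -
  assume p: "p \<in> csp_paths E M"
  then have "p \<noteq> []" "successively (\<lambda>a b. (a,b) \<in> E) p" "hd p \<in> V"
    using MV unfolding csp_paths_def simple_path_iff by auto
  moreover have EI: "E \<inter> V \<times> V = E" using EV by auto
  ultimately show ?thesis using succ_set_restrict[of E V p] unfolding EI by blast
qed

lemma blocked_mem:
  assumes "seg E M q" "hd q = v" "v \<notin> M" "last q \<in> M'" "M' \<subseteq> M" "set q \<subseteq> V"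
    "separates VH (EH (mon_nbrs V E M M')) (Some v) None C"
  shows "\<exists>y\<in>set q. Some y \<in> C"
proof -
  have "Some ` set (butlast q) \<inter> C \<noteq> {}" by (rule seg_blocked[OF assms])
  then obtain z where z: "z \<in> Some ` set (butlast q)" "z \<in> C" by blast
  then obtain y where y: "y \<in> set (butlast q)" "z = Some y" by blast
  have "y \<in> set q" using y(1) by (rule in_set_butlastD)
  then show ?thesis using y(2) z(2) by blast
qed

lemma sep_pre:
  assumes "separates VH EH' (Some v) None C"
  shows "C = Some ` {u. Some u \<in> C}" "{u. Some u \<in> C} \<subseteq> V - M - {v}"
    "card {u. Some u \<in> C} = card C" "finite {u. Some u \<in> C}"
proof -
  have CV: "C \<subseteq> VH - {Some v, None}" using assms unfolding separates_def by auto
  then show C: "C = Some ` {u. Some u \<in> C}" unfolding aux_vertices_def by auto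
  show "{u. Some u \<in> C} \<subseteq> V - M - {v}" using CV unfolding aux_vertices_def by auto
  then show fin: "finite {u. Some u \<in> C}" using finV finite_subset by blast
  show "card {u. Some u \<in> C} = card C" using C by (metis card_image inj_Some inj_on_subset subset_UNIV)
qed

definition "cutm v m = cut_size VH (EH (mon_nbrs V E M (M - {m}))) (Some v) None"
definition "cuts v = cut_size VH (EH (mon_nbrs V E M M)) (Some v) None"

lemma pi_eq: "pi_val V E M v = Min ((\<lambda>m. int (cutm v m)) ` M \<union> {int (cuts v) - 1})"
  unfolding pi_val_def cutm_def cuts_def by (rule arg_cong[where f=Min]) auto

lemma pi_fin: "finite ((\<lambda>m. int (cutm v m)) ` M \<union> {int (cuts v) - 1})"
  using finV MV finite_subset by blast

lemma pi_ge: "a \<le> pi_val V E M v \<Longrightarrow> (\<forall>m\<in>M. a \<le> int (cutm v m)) \<and> a \<le> int (cuts v) - 1"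
  unfolding pi_eq using Min_ge_iff[OF pi_fin] by auto

lemma pi_lt: "pi_val V E M v < a \<Longrightarrow> (\<exists>m\<in>M. int (cutm v m) < a) \<or> int (cuts v) - 1 < a"
  unfolding pi_eq using Min_less_iff[OF pi_fin] by auto

lemma seg_pick:
  assumes "seg E M q1" "seg E M q2" "last q1 \<noteq> last q2"
  shows "\<exists>q\<in>{q1,q2}. last q \<in> M - {m}"
  using assms unfolding seg_def by auto

lemma L1:
  assumes v: "v \<in> V - M" and lt: "pi_val V E M v < int k" and kk: "k < card (V - M)"
    and k1: "1 \<le> k"
  shows "\<exists>F. F \<subseteq> V - M - {v} \<and> finite F \<and> card F < k \<and>
           (\<forall>p\<in>csp_paths E M. v \<in> set p \<longrightarrow> set p \<inter> F \<noteq> {})"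
proof -
  from pi_lt[OF lt] consider (m) m where "m \<in> M" "int (cutm v m) < int k"
    | (s) "int (cuts v) - 1 < int k" by blast
  then show ?thesis
  proof cases
    case m
    let ?A = "mon_nbrs V E M (M - {m})"
    have na: "(Some v, None) \<notin> EH ?A"
    proof
      assume "(Some v, None) \<in> EH ?A"
      then have "cutm v m = card (V - M)" unfolding cutm_def cut_size_def using card_VH by simp
      then show False using m kk by simp
    qed
    obtain C where C: "separates VH (EH ?A) (Some v) None C" "card C = cutm v m"
      using cut_attained[OF v na] unfolding cutm_def by blast
    define F where "F = {u. Some u \<in> C}"
    note pre = sep_pre[OF C(1), folded F_def]
    have "\<forall>p\<in>csp_paths E M. v \<in> set p \<longrightarrow> set p \<inter> F \<noteq> {}"
    proof (intro ballI impI)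
      fix p assume p: "p \<in> csp_paths E M" "v \<in> set p"
      obtain q1 q2 where q: "seg E M q1" "seg E M q2" "hd q1 = v" "hd q2 = v"
        "last q1 \<noteq> last q2" "set q1 \<subseteq> set p" "set q2 \<subseteq> set p"
        using csp_segs[OF p] v by blast
      obtain q where qq: "q \<in> {q1, q2}" "last q \<in> M - {m}" using seg_pick[OF q(1,2,5)] by blast
      have q': "seg E M q" "hd q = v" "set q \<subseteq> set p" using qq(1) q by auto
      have "set q \<subseteq> V" using q'(3) csp_set[OF p(1)] by blast
      then obtain y where y: "y \<in> set q" "Some y \<in> C"
        using blocked_mem[OF q'(1,2) _ qq(2) _ _ C(1)] v by blast
      then show "set p \<inter> F \<noteq> {}" using q'(3) unfolding F_def by blast
    qed
    moreover have "card F < k" using pre(3) C(2) m by simp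
    ultimately show ?thesis using pre by blast
  next
    case s
    let ?A = "mon_nbrs V E M M"
    have na: "(Some v, None) \<notin> EH ?A"
    proof
      assume "(Some v, None) \<in> EH ?A"
      then have "cuts v = card (V - M)" unfolding cuts_def cut_size_def using card_VH by simp
      then show False using s kk by simp
    qed
    obtain C where C: "separates VH (EH ?A) (Some v) None C" "card C = cuts v"
      using cut_attained[OF v na] unfolding cuts_def by blast
    note pre = sep_pre[OF C(1)]
    have blk: "\<exists>y\<in>set q. Some y \<in> C" if "seg E M q" "hd q = v" "set q \<subseteq> V" for q
      using blocked_mem[OF that(1,2) _ _ _ that(3) C(1)] v that(1) unfolding seg_def by blast
    show ?thesis
    proof (cases "C = {}")
      case True
      have "\<forall>p\<in>csp_paths E M. v \<in> set p \<longrightarrow> False"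
      proof (intro ballI impI)
        fix p assume p: "p \<in> csp_paths E M" "v \<in> set p"
        obtain q1 q2 where q: "seg E M q1" "hd q1 = v" "set q1 \<subseteq> set p"
          using csp_segs[OF p] v by blast
        have "set q1 \<subseteq> V" using q(3) csp_set[OF p(1)] by blast
        then show False using blk[OF q(1,2)] True by blast
      qed
      then show ?thesis using k1
        by (intro exI[of _ "{}"]) auto
    next
      case False
      then obtain c where c: "c \<in> C" by blast
      then obtain u where u: "c = Some u" using pre(1) by blast
      define F where "F = {u. Some u \<in> C} - {u}"
      have uC: "u \<in> {u. Some u \<in> C}" using c u by simp
      have "\<forall>p\<in>csp_paths E M. v \<in> set p \<longrightarrow> set p \<inter> F \<noteq> {}"
      proof (intro ballI impI)
        fix p assume p: "p \<in> csp_paths E M" "v \<in> set p"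
        obtain q1 q2 where q: "seg E M q1" "seg E M q2" "hd q1 = v" "hd q2 = v"
          "set q1 \<inter> set q2 = {v}" "set q1 \<subseteq> set p" "set q2 \<subseteq> set p"
          using csp_segs[OF p] v by blast
        have V: "set q1 \<subseteq> V" "set q2 \<subseteq> V" using q(6,7) csp_set[OF p(1)] by auto
        obtain y1 where y1: "y1 \<in> set q1" "Some y1 \<in> C" using blk[OF q(1,3) V(1)] by blast
        obtain y2 where y2: "y2 \<in> set q2" "Some y2 \<in> C" using blk[OF q(2,4) V(2)] by blast
        show "set p \<inter> F \<noteq> {}"
        proof
          assume dis: "set p \<inter> F = {}"
          have "y1 = u" using dis y1 q(6) unfolding F_def by blast
          moreover have "y2 = u" using dis y2 q(7) unfolding F_def by blast
          ultimately have "u = v" using y1(1) y2(1) q(5) by blast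
          then show False using pre(2) uC by blast
        qed
      qed
      moreover have "card F < k"
      proof -
        have "card F = card C - 1" unfolding F_def using pre(3,4) uC by (simp add: card_Diff_singleton)
        moreover have "card C > 0" using False pre(1,4) by (metis card_gt_0_iff finite_imageI)
        ultimately show ?thesis using C(2) s by linarith
      qed
      moreover have "F \<subseteq> V - M - {v}" "finite F" using pre(2,4) unfolding F_def by auto
      ultimately show ?thesis by blast
    qed
  qed
qed

definition Kr :: "'a set \<Rightarrow> 'a set \<Rightarrow> ('a option \<times> 'a option) set" where
  "Kr D M' = {(Some a, Some b) | a b. (a,b) \<in> E \<and> a \<in> V - M - D \<and> b \<in> V - M - D}
   \<union> {(Some a, Some m) | a m. (a,m) \<in> E \<and> a \<in> V - M - D \<and> m \<in> M'}
   \<union> {(Some m, Some a) | a m. (a,m) \<in> E \<and> a \<in> V - M - D \<and> m \<in> M'}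
   \<union> {(Some m, None) | m. m \<in> M'} \<union> {(None, Some m) | m. m \<in> M'}"

lemma sym_Kr: "sym (Kr D M')"
  using symE unfolding Kr_def sym_def by blast

lemma Kr_mono: "D' \<subseteq> D \<Longrightarrow> M'' \<subseteq> M' \<Longrightarrow> Kr D M'' \<subseteq> Kr D' M'"
  unfolding Kr_def by blast

lemma reach:
  assumes v: "v \<in> V - M - D" and D: "D \<subseteq> V - M" "finite D" and M': "M' \<subseteq> M"
    and lt: "card D < cut_size VH (EH (mon_nbrs V E M M')) (Some v) None"
  shows "(Some v, None) \<in> (Kr D M')\<^sup>*"
proof (cases "(Some v, None) \<in> EH (mon_nbrs V E M M')")
  case True
  then have "v \<in> mon_nbrs V E M M'" using adj_iff v by blast
  then obtain m where m: "m \<in> M'" "(m, v) \<in> E" unfolding mon_nbrs_def by blast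
  then have "(v, m) \<in> E" using symE by (auto dest: symD)
  then have "(Some v, Some m) \<in> Kr D M'" "(Some m, None) \<in> Kr D M'" using m v unfolding Kr_def by auto
  then show ?thesis by (meson r_into_rtrancl rtrancl_into_rtrancl)
next
  case False
  let ?A = "mon_nbrs V E M M'"
  let ?R = "EH ?A \<inter> (VH - Some ` D) \<times> (VH - Some ` D)"
  have "\<not> separates VH (EH ?A) (Some v) None (Some ` D)"
  proof
    assume "separates VH (EH ?A) (Some v) None (Some ` D)"
    from cut_le[OF False this] lt show False by (simp add: card_image)
  qed
  moreover have "Some ` D \<subseteq> VH - {Some v, None}" using D v unfolding aux_vertices_def by auto
  ultimately have "(Some v, None) \<in> ?R\<^sup>*" unfolding separates_def by blast
  moreover have "?R \<subseteq> (Kr D M')\<^sup>*"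
  proof
    fix xy assume xy: "xy \<in> ?R"
    obtain x y where xy_eq: "xy = (x, y)" by (cases xy)
    have in1: "(x, y) \<in> EH ?A" and xn: "x \<notin> Some ` D" "y \<notin> Some ` D"
      using xy xy_eq by auto
    show "xy \<in> (Kr D M')\<^sup>*"
      using in1 unfolding aux_edges_def
    proof (elim UnE CollectE exE conjE)
      fix a b assume "(x, y) = (Some a, Some b)" "(a, b) \<in> E" "a \<in> V - M" "b \<in> V - M"
      then have "xy \<in> Kr D M'" using xy_eq xn unfolding Kr_def by auto
      then show ?thesis by blast
    next
      fix b assume b: "(x, y) = (None, Some b)" "b \<in> ?A"
      then obtain m where m: "m \<in> M'" "(m, b) \<in> E" "b \<in> V - M" unfolding mon_nbrs_def by blast
      then have "(b, m) \<in> E" using symE by (auto dest: symD)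
      moreover have "b \<notin> D" using xn b by auto
      ultimately have "(None, Some m) \<in> Kr D M'" "(Some m, Some b) \<in> Kr D M'"
        using m unfolding Kr_def by auto
      then have "(None, Some b) \<in> (Kr D M')\<^sup>*" by (meson r_into_rtrancl rtrancl_into_rtrancl)
      then show ?thesis using b xy_eq by simp
    next
      fix b assume b: "(x, y) = (Some b, None)" "b \<in> ?A"
      then obtain m where m: "m \<in> M'" "(m, b) \<in> E" "b \<in> V - M" unfolding mon_nbrs_def by blast
      then have "(b, m) \<in> E" using symE by (auto dest: symD)
      moreover have "b \<notin> D" using xn b by auto
      ultimately have "(Some b, Some m) \<in> Kr D M'" "(Some m, None) \<in> Kr D M'"
        using m unfolding Kr_def by auto
      then have "(Some b, None) \<in> (Kr D M')\<^sup>*" by (meson r_into_rtrancl rtrancl_into_rtrancl)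
      then show ?thesis using b xy_eq by simp
    qed
  qed
  ultimately show ?thesis using rtrancl_subset_rtrancl by blast
qed

lemma NS_K:
  assumes v: "v \<in> V - M" and F: "F \<subseteq> V - M - {v}" "finite F" "card F \<le> k"
    and ge: "int k + 1 \<le> pi_val V E M v"
  shows "NS (Kr F M) (Some v) None" "(Some v, None) \<in> (Kr F M)\<^sup>*"
proof -
  have gm: "\<forall>m\<in>M. int k + 1 \<le> int (cutm v m)" and gs: "int k + 1 \<le> int (cuts v) - 1"
    using pi_ge[OF ge] by auto
  show "(Some v, None) \<in> (Kr F M)\<^sup>*"
    using reach[of v F M] v F gs unfolding cuts_def by auto
  show "NS (Kr F M) (Some v) None" unfolding NS_def
  proof (intro allI impI)
    fix z assume z1: "z \<noteq> Some v" and z2: "z \<noteq> None"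
    then obtain u where u: "z = Some u" by blast
    show "(Some v, None) \<in> (Kr F M \<inter> (-{z}) \<times> (-{z}))\<^sup>*"
    proof (cases "u \<in> M")
      case True
      have "(Some v, None) \<in> (Kr F (M - {u}))\<^sup>*"
        using reach[of v F "M - {u}"] v F gm True unfolding cutm_def by fastforce
      moreover have "Kr F (M - {u}) \<subseteq> Kr F M \<inter> (-{z}) \<times> (-{z})"
        using u True unfolding Kr_def by blast
      ultimately show ?thesis using rtrancl_mono by blast
    next
      case False
      define D where "D = insert u F \<inter> (V - M)"
      have uv: "u \<noteq> v" using z1 u by simp
      have D: "D \<subseteq> V - M" "finite D" "v \<notin> D" using F uv unfolding D_def by auto
      have "card D \<le> card (insert u F)" unfolding D_def using F(2) by (intro card_mono) auto
      also have "\<dots> \<le> k + 1" using F(2,3) by (simp add: card_insert_if)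
      finally have "card D < cuts v" using gs by linarith
      then have "(Some v, None) \<in> (Kr D M)\<^sup>*"
        using reach[of v D M] v D unfolding cuts_def by auto
      moreover have "Kr D M \<subseteq> Kr F M \<inter> (-{z}) \<times> (-{z})"
        using u False F(1) unfolding Kr_def D_def by blast
      ultimately show ?thesis using rtrancl_mono by blast
    qed
  qed
qed

lemma extract_seg:
  "pth (Kr F M) P (Some a) None \<Longrightarrow> a \<in> V - M - F \<Longrightarrow>
   \<exists>q. q \<noteq> [] \<and> hd q = a \<and> last q \<in> M \<and> set (butlast q) \<subseteq> V - M - F \<and>
        successively (\<lambda>x y. (x,y) \<in> E) q \<and> distinct q \<and> Some ` set q \<subseteq> set P"
proof (induction P arbitrary: a)
  case Nil then show ?case unfolding pth_def by simp
next
  case (Cons X P')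
  have X: "X = Some a" using Cons.prems unfolding pth_def by simp
  have P'ne: "P' \<noteq> []" using Cons.prems X unfolding pth_def by auto
  have d: "distinct (X # P')" and sc: "successively (\<lambda>x y. (x,y) \<in> Kr F M) (X # P')"
    and l: "last P' = None" using Cons.prems P'ne unfolding pth_def by auto
  obtain Y P'' where P'eq: "P' = Y # P''" using P'ne by (cases P') auto
  have XY: "(Some a, Y) \<in> Kr F M" using sc P'eq X by simp
  have scP': "successively (\<lambda>x y. (x,y) \<in> Kr F M) P'" using sc P'eq by simp
  have dP': "distinct P'" and aP': "Some a \<notin> set P'" using d X by auto
  have a: "a \<in> V - M - F" by fact
  have "(\<exists>b. Y = Some b \<and> (a,b) \<in> E \<and> b \<in> V - M - F) \<or> (\<exists>m. Y = Some m \<and> (a,m) \<in> E \<and> m \<in> M)"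
    using XY a unfolding Kr_def by auto
  then consider (nm) b where "Y = Some b" "(a,b) \<in> E" "b \<in> V - M - F"
    | (mon) m where "Y = Some m" "(a,m) \<in> E" "m \<in> M"
    by blast
  then show ?case
  proof cases
    case nm
    have "pth (Kr F M) P' (Some b) None" using P'ne nm(1) P'eq dP' scP' l unfolding pth_def by auto
    from Cons.IH[OF this nm(3)] obtain q where q: "q \<noteq> []" "hd q = b" "last q \<in> M"
      "set (butlast q) \<subseteq> V - M - F" "successively (\<lambda>x y. (x,y) \<in> E) q" "distinct q"
      "Some ` set q \<subseteq> set P'" by blast
    have "a \<notin> set q" using q(7) aP' by blast
    moreover have "successively (\<lambda>x y. (x,y) \<in> E) (a # q)" using q(1,2,5) nm(2)
      by (cases q) auto
    moreover have "set (butlast (a # q)) \<subseteq> V - M - F" using q(1,4) a by auto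
    ultimately show ?thesis using q X
      by (intro exI[of _ "a # q"]) auto
  next
    case mon
    have "m \<noteq> a" using mon(3) a by auto
    moreover have "Some m \<in> set (X # P')" using mon(1) P'eq by simp
    ultimately show ?thesis using mon a X
      by (intro exI[of _ "[a, m]"]) auto
  qed
qed

lemma L2:
  assumes v: "v \<in> V - M" and F: "F \<subseteq> V - M - {v}" "finite F" "card F \<le> k"
    and ge: "int k + 1 \<le> pi_val V E M v"
  shows "\<exists>p\<in>csp_paths E M. v \<in> set p \<and> set p \<inter> F = {}"
proof -
  let ?K = "Kr F M"
  have r: "(Some v, None) \<in> ?K\<^sup>*" by (rule NS_K(2)[OF assms])
  have ns: "NS ?K (Some v) None" by (rule NS_K(1)[OF assms])
  obtain p0 where p0: "pth ?K p0 (Some v) None" using rt_pth[OF r] by (elim exE)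
  have "Two ?K (Some v) None" by (rule menger2[OF sym_Kr ns _ p0]) simp
  then obtain P1 P2 where P: "pth ?K P1 (Some v) None" "pth ?K P2 (Some v) None"
    "set P1 \<inter> set P2 \<subseteq> {Some v, None}" unfolding Two_def by (elim exE conjE)
  have vF: "v \<in> V - M - F" using v F by auto
  obtain q1 where q1: "q1 \<noteq> []" "hd q1 = v" "last q1 \<in> M" "set (butlast q1) \<subseteq> V - M - F"
    "successively (\<lambda>x y. (x,y) \<in> E) q1" "distinct q1" "Some ` set q1 \<subseteq> set P1"
    using extract_seg[OF P(1) vF] by blast
  obtain q2 where q2: "q2 \<noteq> []" "hd q2 = v" "last q2 \<in> M" "set (butlast q2) \<subseteq> V - M - F"
    "successively (\<lambda>x y. (x,y) \<in> E) q2" "distinct q2" "Some ` set q2 \<subseteq> set P2"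
    using extract_seg[OF P(2) vF] by blast
  have inter: "set q1 \<inter> set q2 \<subseteq> {v}"
  proof
    fix y assume y: "y \<in> set q1 \<inter> set q2"
    then have "Some y \<in> set P1" "Some y \<in> set P2" using q1(7) q2(7) by auto
    then have "Some y \<in> {Some v, None}" using P(3) by blast
    then show "y \<in> {v}" by simp
  qed
  obtain t1 where t1: "q1 = v # t1" using q1(1,2) by (cases q1) auto
  obtain t2 where t2: "q2 = v # t2" using q2(1,2) by (cases q2) auto
  have t2ne: "t2 \<noteq> []" using t2 q2(3) v by auto
  have t1ne: "t1 \<noteq> []" using t1 q1(3) v by auto
  define p where "p = rev q1 @ t2"
  have hp: "hd p = last q1" unfolding p_def using q1(1) by (simp add: hd_append hd_rev)
  have lp: "last p = last q2" unfolding p_def using t2 t2ne by simp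
  have dis12: "set t1 \<inter> set t2 = {}" using inter t1 t2 q1(6) q2(6) by auto
  have dp: "distinct p" unfolding p_def using q1(6) q2(6) t2 dis12 t1 by auto
  have sp: "successively (\<lambda>x y. (x,y) \<in> E) p"
  proof -
    have "successively (\<lambda>x y. (x,y) \<in> E) (rev t1 @ [v])"
      using succ_sym[OF symE q1(5)] t1 by simp
    moreover have "successively (\<lambda>x y. (x,y) \<in> E) (v # t2)" using q2(5) t2 by simp
    ultimately have "successively (\<lambda>x y. (x,y) \<in> E) (rev t1 @ v # t2)"
      by (simp add: succ_join)
    then show ?thesis unfolding p_def using t1 by simp
  qed
  have "last q1 \<in> set q1" "last q2 \<in> set q2" using q1(1) q2(1) by auto
  then have "last q1 \<noteq> last q2" using inter q1(3) v by auto
  moreover have pne: "p \<noteq> []" unfolding p_def using t2ne by simp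
  ultimately have pc: "p \<in> csp_paths E M"
    unfolding csp_paths_def simple_path_iff using hp lp dp sp q1(3) q2(3) by simp
  have vp: "v \<in> set p" unfolding p_def using t1 by simp
  have "set q1 \<inter> F = {}"
  proof -
    have "set q1 = insert (last q1) (set (butlast q1))" using q1(1) by (rule set_bl)
    then show ?thesis using q1(3,4) F(1) by auto
  qed
  moreover have "set q2 \<inter> F = {}"
  proof -
    have "set q2 = insert (last q2) (set (butlast q2))" using q2(1) by (rule set_bl)
    then show ?thesis using q2(3,4) F(1) by auto
  qed
  ultimately have "set p \<inter> F = {}" unfolding p_def using t2 by auto
  then show ?thesis using pc vp by blast
qed

end

theorem corollary5:
  fixes V M S :: "'a set" and E :: "('a \<times> 'a) set" and k :: nat
  assumes "simple_graph V E" and "connected_graph V E" and "M \<subseteq> V"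
    and "1 \<le> k" and "k \<le> card (V - M) - 1"
    and "S \<subseteq> V - M" and "k_identifiable E M (V - M) k S"
    and "\<forall>S'. S' \<subseteq> V - M \<and> k_identifiable E M (V - M) k S' \<longrightarrow> card S' \<le> card S"
  shows "S_inner V E M k \<subseteq> S \<and> S \<subseteq> S_outer V E M k"
proof -
  have finV: "finite V" using assms(1) unfolding simple_graph_def by auto
  then have finN: "finite (V - M)" by auto
  have kN: "k < card (V - M)" using assms(4,5) by linarith
  let ?P = "csp_paths E M"
  have outer: "S \<subseteq> S_outer V E M k"
  proof
    fix v assume vS: "v \<in> S"
    then have v: "v \<in> V - M" using assms(6) by blast
    show "v \<in> S_outer V E M k"
    proof (rule ccontr)
      assume "v \<notin> S_outer V E M k"
      then have lt: "pi_val V E M v < int k" using v unfolding S_outer_def by auto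
      obtain F where F: "F \<subseteq> V - M - {v}" "finite F" "card F < k"
        "\<forall>p\<in>?P. v \<in> set p \<longrightarrow> set p \<inter> F \<noteq> {}"
        using L1[OF assms(1,3) v lt kN assms(4)] by blast
      have c1: "card (insert v F) \<le> k" using F(2,3) by (simp add: card_insert_if)
      have "insert v F \<inter> S \<noteq> F \<inter> S" using vS F(1) by blast
      moreover have "insert v F \<subseteq> V - M" "F \<subseteq> V - M" "card F \<le> k" using F(1,3) v by auto
      ultimately have "failed_paths ?P (insert v F) \<noteq> failed_paths ?P F"
        using assms(7) c1 unfolding k_identifiable_def by blast
      moreover have "failed_paths ?P (insert v F) = failed_paths ?P F"
      proof -
        have "set p \<inter> insert v F \<noteq> {} \<longleftrightarrow> set p \<inter> F \<noteq> {}" if "p \<in> ?P" for p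
          using F(4) that by blast
        then show ?thesis unfolding failed_paths_def by blast
      qed
      ultimately show False by blast
    qed
  qed
  have inner: "S_inner V E M k \<subseteq> S"
  proof
    fix v assume vI: "v \<in> S_inner V E M k"
    then have v: "v \<in> V - M" and ge: "int k + 1 \<le> pi_val V E M v" unfolding S_inner_def by auto
    show "v \<in> S"
    proof (rule ccontr)
      assume vS: "v \<notin> S"
      let ?S' = "insert v S"
      have key: "failed_paths ?P F1 \<noteq> failed_paths ?P F2"
        if "F1 \<subseteq> V - M" "F2 \<subseteq> V - M" "card F2 \<le> k" "v \<in> F1" "v \<notin> F2" for F1 F2
      proof -
        have "F2 \<subseteq> V - M - {v}" "finite F2" using that finN finite_subset by auto
        from L2[OF assms(1,3) v this that(3) ge] obtain p where
          p: "p \<in> ?P" "v \<in> set p" "set p \<inter> F2 = {}" by blast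
        then have "p \<in> failed_paths ?P F1" "p \<notin> failed_paths ?P F2"
          using that(4) unfolding failed_paths_def by auto
        then show ?thesis by blast
      qed
      have "k_identifiable E M (V - M) k ?S'"
        unfolding k_identifiable_def
      proof (intro allI impI)
        fix F1 F2 assume H: "F1 \<subseteq> V - M" "F2 \<subseteq> V - M" "card F1 \<le> k" "card F2 \<le> k"
          "F1 \<inter> ?S' \<noteq> F2 \<inter> ?S'"
        show "failed_paths ?P F1 \<noteq> failed_paths ?P F2"
        proof (cases "F1 \<inter> S = F2 \<inter> S")
          case False
          then show ?thesis using assms(7) H unfolding k_identifiable_def by blast
        next
          case True
          then have "(v \<in> F1 \<and> v \<notin> F2) \<or> (v \<in> F2 \<and> v \<notin> F1)" using H(5) by blast
          then show ?thesis
          proof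
            assume "v \<in> F1 \<and> v \<notin> F2" then show ?thesis using key H by blast
          next
            assume "v \<in> F2 \<and> v \<notin> F1" then show ?thesis using key[of F2 F1] H by metis
          qed
        qed
      qed
      moreover have "?S' \<subseteq> V - M" using v assms(6) by blast
      ultimately have "card ?S' \<le> card S" using assms(8) by blast
      moreover have "finite S" using assms(6) finN finite_subset by blast
      ultimately show False using vS by simp
    qed
  qed
  show ?thesis using inner outer by blast
qed

end
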